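(* Let $K\ge 1$, $c>0$, $P_{\max}>0$, and for $k,k'\in\{1,\dots,K\}$ let $a_{k,k'}\ge 0$, $d_k\ge 0$, $n_k>0$ with $a_{k,k}\ge d_k$, and $\gamma_k\ge 0$. Define on $[0,\infty)^K$ $$f_k(\mathbf{P})=\log_2\Big(\sum_{k'}a_{k,k'}P_{k'}+n_k\Big),\quad g_k(\mathbf{P})=\log_2\Big(\sum_{k'}a_{k,k'}P_{k'}-d_kP_k+n_k\Big),\quad R_k=c\,(f_k-g_k),$$ the first-order Taylor expansions at $\mathbf{P}_0$ $$\hat f_k(\mathbf{P},\mathbf{P}_0)=f_k(\mathbf{P}_0)+\frac{\sum_{k'}a_{k,k'}(P_{k'}-P_{0,k'})}{\ln 2\,(\sum_{k'}a_{k,k'}P_{0,k'}+n_k)},\quad \hat g_k(\mathbf{P},\mathbf{P}_0)=g_k(\mathbf{P}_0)+\frac{\sum_{k'}a_{k,k'}(P_{k'}-P_{0,k'})-d_k(P_k-P_{0,k})}{\ln 2\,(\sum_{k'}a_{k,k'}P_{0,k'}-d_kP_{0,k}+n_k)},$$ $\hat R_k(\mathbf{P},\mathbf{P}_0)=c(\hat f_k(\mathbf{P},\mathbf{P}_0)-g_k(\mathbf{P}))$, $\overline R_k(\mathbf{P},\mathbf{P}_0)=c(f_k(\mathbf{P})-\hat g_k(\mathbf{P},\mathbf{P}_0))$, $P_{\mathrm N}(\mathbf{P},x)=C_0+\sum_k\Delta_kP_k+\sum_k\beta_kx_k$ with $C_0>0$, $\Delta_k\ge1$, $\beta_k>0$,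 $$\mathrm{EE}(\mathbf{P})=\frac{\sum_kR_k(\mathbf{P})}{P_{\mathrm N}(\mathbf{P},(R_k(\mathbf{P}))_k)},\qquad \overline{\mathrm{EE}}(\mathbf{P},\mathbf{P}_0)=\frac{\sum_k\overline R_k(\mathbf{P},\mathbf{P}_0)}{P_{\mathrm N}(\mathbf{P},(\hat R_k(\mathbf{P},\mathbf{P}_0))_k)}.$$ Let $\mathcal F=\{\mathbf P: 0\le P_k\le P_{\max},\ \gamma_k(\sum_{k'}a_{k,k'}P_{k'}+n_k)-(1+\gamma_k)d_kP_k\le 0\ \ \forall k\}$, assumed nonempty. The Successive Lower-Bound Maximization (SLM) algorithm starts from some $\mathbf P^{(0)}\in\mathcal F$ and iterates $\mathbf P^{(n)}\in\arg\max_{\mathbf P\in\mathcal F}\overline{\mathrm{EE}}(\mathbf P,\mathbf P^{(n-1)})$. Then every limit point of the iterates $(\mathbf P^{(n)})$ generated by the SLM algorithm is a stationary point of the problem $\max_{\mathbf P\in\mathcal F}\mathrm{EE}(\mathbf P)$, and the SLM algorithm is globally convergent.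
   Context: Model: uplink network with $K$ users, $P_k$ the transmit power of user $k$; $c=\tau_uB/(\tau_u+\tau_p)$, $a_{k,k'}=\mathbb{E}\{|\mathrm{IS}_{k,k'}|^2\}$, $d_k=|\mathbb{E}\{\mathrm{DS}_k\}|^2$, $n_k$ effective noise power; $R_k$ is the rate of user $k$; $P_{\mathrm N}$ is the total network power (affine in the rates with positive coefficients); the constraint defining $\mathcal F$ is the QoS constraint $R_k\ge R_{k,\min}$ rewritten linearly with $\gamma_k=2^{\tau_cR_{k,\min}/(\tau_uB)}-1$. A stationary point of $\max_{\mathbf P\in\mathcal F}\mathrm{EE}(\mathbf P)$ is a point $\mathbf P^*\in\mathcal F$ with $\nabla\mathrm{EE}(\mathbf P^* )^{\top}(\mathbf P-\mathbf P^* )\le 0$ for all $\mathbf P\in\mathcal F$. "Globally convergent" means the stated limit-point property holds for any feasible initial point. *)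

theory Defs
  imports "HOL-Analysis.Analysis"
begin

text \<open>Power vectors live in real^'k, where the finite type 'k indexes the K users
  (K = CARD('k) \<ge> 1 automatically).  a k k' is a_{k,k'}.\<close>

definition ffun :: "('k::finite \<Rightarrow> 'k \<Rightarrow> real) \<Rightarrow> ('k \<Rightarrow> real) \<Rightarrow> real^'k \<Rightarrow> 'k \<Rightarrow> real" where
  "ffun a n P k = log 2 ((\<Sum>k'\<in>UNIV. a k k' * P$k') + n k)"

definition gfun :: "('k::finite \<Rightarrow> 'k \<Rightarrow> real) \<Rightarrow> ('k \<Rightarrow> real) \<Rightarrow> ('k \<Rightarrow> real) \<Rightarrow> real^'k \<Rightarrow> 'k \<Rightarrow> real" where
  "gfun a d n P k = log 2 ((\<Sum>k'\<in>UNIV. a k k' * P$k') - d k * P$k + n k)"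

definition Rate :: "real \<Rightarrow> ('k::finite \<Rightarrow> 'k \<Rightarrow> real) \<Rightarrow> ('k \<Rightarrow> real) \<Rightarrow> ('k \<Rightarrow> real) \<Rightarrow> real^'k \<Rightarrow> 'k \<Rightarrow> real" where
  "Rate c a d n P k = c * (ffun a n P k - gfun a d n P k)"

definition fhat :: "('k::finite \<Rightarrow> 'k \<Rightarrow> real) \<Rightarrow> ('k \<Rightarrow> real) \<Rightarrow> real^'k \<Rightarrow> real^'k \<Rightarrow> 'k \<Rightarrow> real" where
  "fhat a n P P0 k = ffun a n P0 k +
     (\<Sum>k'\<in>UNIV. a k k' * (P$k' - P0$k')) / (ln 2 * ((\<Sum>k'\<in>UNIV. a k k' * P0$k') + n k))"

definition ghat :: "('k::finite \<Rightarrow> 'k \<Rightarrow> real) \<Rightarrow> ('k \<Rightarrow> real) \<Rightarrow> ('k \<Rightarrow> real) \<Rightarrow> real^'k \<Rightarrow> real^'k \<Rightarrow> 'k \<Rightarrow> real" where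
  "ghat a d n P P0 k = gfun a d n P0 k +
     ((\<Sum>k'\<in>UNIV. a k k' * (P$k' - P0$k')) - d k * (P$k - P0$k)) /
       (ln 2 * ((\<Sum>k'\<in>UNIV. a k k' * P0$k') - d k * P0$k + n k))"

definition Rhat :: "real \<Rightarrow> ('k::finite \<Rightarrow> 'k \<Rightarrow> real) \<Rightarrow> ('k \<Rightarrow> real) \<Rightarrow> ('k \<Rightarrow> real) \<Rightarrow> real^'k \<Rightarrow> real^'k \<Rightarrow> 'k \<Rightarrow> real" where
  "Rhat c a d n P P0 k = c * (fhat a n P P0 k - gfun a d n P k)"

definition Rbar :: "real \<Rightarrow> ('k::finite \<Rightarrow> 'k \<Rightarrow> real) \<Rightarrow> ('k \<Rightarrow> real) \<Rightarrow> ('k \<Rightarrow> real) \<Rightarrow> real^'k \<Rightarrow> real^'k \<Rightarrow> 'k \<Rightarrow> real" where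
  "Rbar c a d n P P0 k = c * (ffun a n P k - ghat a d n P P0 k)"

definition PN :: "real \<Rightarrow> ('k::finite \<Rightarrow> real) \<Rightarrow> ('k \<Rightarrow> real) \<Rightarrow> real^'k \<Rightarrow> ('k \<Rightarrow> real) \<Rightarrow> real" where
  "PN C0 \<Delta> \<beta> P x = C0 + (\<Sum>k\<in>UNIV. \<Delta> k * P$k) + (\<Sum>k\<in>UNIV. \<beta> k * x k)"

definition EE :: "real \<Rightarrow> ('k::finite \<Rightarrow> 'k \<Rightarrow> real) \<Rightarrow> ('k \<Rightarrow> real) \<Rightarrow> ('k \<Rightarrow> real)
    \<Rightarrow> real \<Rightarrow> ('k \<Rightarrow> real) \<Rightarrow> ('k \<Rightarrow> real) \<Rightarrow> real^'k \<Rightarrow> real" where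
  "EE c a d n C0 \<Delta> \<beta> P =
     (\<Sum>k\<in>UNIV. Rate c a d n P k) / PN C0 \<Delta> \<beta> P (\<lambda>k. Rate c a d n P k)"

definition EEbar :: "real \<Rightarrow> ('k::finite \<Rightarrow> 'k \<Rightarrow> real) \<Rightarrow> ('k \<Rightarrow> real) \<Rightarrow> ('k \<Rightarrow> real)
    \<Rightarrow> real \<Rightarrow> ('k \<Rightarrow> real) \<Rightarrow> ('k \<Rightarrow> real) \<Rightarrow> real^'k \<Rightarrow> real^'k \<Rightarrow> real" where
  "EEbar c a d n C0 \<Delta> \<beta> P P0 =
     (\<Sum>k\<in>UNIV. Rbar c a d n P P0 k) / PN C0 \<Delta> \<beta> P (\<lambda>k. Rhat c a d n P P0 k)"

definition Feas :: "real \<Rightarrow> ('k::finite \<Rightarrow> 'k \<Rightarrow> real) \<Rightarrow> ('k \<Rightarrow> real) \<Rightarrow> ('k \<Rightarrow> real) \<Rightarrow> ('k \<Rightarrow> real) \<Rightarrow> (real^'k) set" where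
  "Feas Pmax a d n \<gamma> = {P. \<forall>k. 0 \<le> P$k \<and> P$k \<le> Pmax \<and>
      \<gamma> k * ((\<Sum>k'\<in>UNIV. a k k' * P$k') + n k) - (1 + \<gamma> k) * d k * P$k \<le> 0}"

definition stationary_point :: "(real^'k::finite \<Rightarrow> real) \<Rightarrow> (real^'k) set \<Rightarrow> real^'k \<Rightarrow> bool" where
  "stationary_point h S Ps \<longleftrightarrow> Ps \<in> S \<and>
     (\<exists>D. (h has_derivative D) (at Ps) \<and> (\<forall>P\<in>S. D (P - Ps) \<le> 0))"

definition limit_point :: "(nat \<Rightarrow> 'a::topological_space) \<Rightarrow> 'a \<Rightarrow> bool" where
  "limit_point X x \<longleftrightarrow> (\<exists>r. strict_mono r \<and> (X \<circ> r) \<longlonglongrightarrow> x)"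

end

theory Submission imports Defs begin

lemma vnth_deriv: "((\<lambda>P::real^'k::finite. P $ i) has_derivative (\<lambda>h. h $ i)) F"
  by (rule bounded_linear.has_derivative[OF bounded_linear_vec_nth has_derivative_ident])

definition LF :: "('k::finite \<Rightarrow> 'k \<Rightarrow> real) \<Rightarrow> ('k \<Rightarrow> real) \<Rightarrow> 'k \<Rightarrow> real^'k \<Rightarrow> real" where
  "LF a n k P = (\<Sum>k'\<in>UNIV. a k k' * P$k') + n k"
definition LG :: "('k::finite \<Rightarrow> 'k \<Rightarrow> real) \<Rightarrow> ('k \<Rightarrow> real) \<Rightarrow> ('k \<Rightarrow> real) \<Rightarrow> 'k \<Rightarrow> real^'k \<Rightarrow> real" where
  "LG a d n k P = (\<Sum>k'\<in>UNIV. a k k' * P$k') - d k * P$k + n k"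
definition LF' :: "('k::finite \<Rightarrow> 'k \<Rightarrow> real) \<Rightarrow> 'k \<Rightarrow> real^'k \<Rightarrow> real" where
  "LF' a k h = (\<Sum>k'\<in>UNIV. a k k' * h$k')"
definition LG' :: "('k::finite \<Rightarrow> 'k \<Rightarrow> real) \<Rightarrow> ('k \<Rightarrow> real) \<Rightarrow> 'k \<Rightarrow> real^'k \<Rightarrow> real" where
  "LG' a d k h = (\<Sum>k'\<in>UNIV. a k k' * h$k') - d k * h$k"

lemma LF_deriv: "(LF a n k has_derivative LF' a k) F"
  unfolding LF_def[abs_def] LF'_def[abs_def]
  by (auto intro!: derivative_eq_intros vnth_deriv)

lemma LG_deriv: "(LG a d n k has_derivative LG' a d k) F"
  unfolding LG_def[abs_def] LG'_def[abs_def]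
  by (auto intro!: derivative_eq_intros vnth_deriv)

lemma LF_tendsto: "(X \<longlongrightarrow> x) F \<Longrightarrow> ((\<lambda>j. LF a n k (X j)) \<longlongrightarrow> LF a n k x) F"
  unfolding LF_def by (auto intro!: tendsto_intros)

lemma LG_tendsto: "(X \<longlongrightarrow> x) F \<Longrightarrow> ((\<lambda>j. LG a d n k (X j)) \<longlongrightarrow> LG a d n k x) F"
  unfolding LG_def by (auto intro!: tendsto_intros)

lemma log_deriv:
  fixes L :: "real^'k::finite \<Rightarrow> real"
  assumes "(L has_derivative L') (at x)" "L x > 0"
  shows "((\<lambda>y. log 2 (L y)) has_derivative (\<lambda>h. L' h / (ln 2 * L x))) (at x)"
proof -
  have "((\<lambda>y. ln (L y) / ln 2) has_derivative (\<lambda>h. L' h / (ln 2 * L x))) (at x)"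
    using assms by (auto intro!: derivative_eq_intros simp: field_simps)
  then show ?thesis by (simp add: log_def)
qed

lemma tan_deriv:
  fixes L :: "real^'k::finite \<Rightarrow> real"
  assumes "(L has_derivative L') (at x)" "L x > 0"
  shows "((\<lambda>y. log 2 (L x) + (L y - L x) / (ln 2 * L x)) has_derivative (\<lambda>h. L' h / (ln 2 * L x))) (at x)"
  using assms by (auto intro!: derivative_eq_intros)

lemma ffun_eq: "ffun a n P k = log 2 (LF a n k P)"
  by (simp add: ffun_def LF_def)
lemma gfun_eq: "gfun a d n P k = log 2 (LG a d n k P)"
  by (simp add: gfun_def LG_def)
lemma fhat_eq: "fhat a n P P0 k = log 2 (LF a n k P0) + (LF a n k P - LF a n k P0) / (ln 2 * LF a n k P0)"
  by (simp add: fhat_def ffun_def LF_def right_diff_distrib sum_subtractf)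
lemma ghat_eq: "ghat a d n P P0 k = log 2 (LG a d n k P0) + (LG a d n k P - LG a d n k P0) / (ln 2 * LG a d n k P0)"
  by (simp add: ghat_def gfun_def LG_def right_diff_distrib sum_subtractf algebra_simps)

definition Rd where
  "Rd c a d n x k h = c * (LF' a k h / (ln 2 * LF a n k x) - LG' a d k h / (ln 2 * LG a d n k x))"

lemma Rate_deriv:
  assumes "LF a n k x > 0" "LG a d n k x > 0"
  shows "((\<lambda>P. Rate c a d n P k) has_derivative Rd c a d n x k) (at x)"
  unfolding Rate_def ffun_eq gfun_eq Rd_def[abs_def]
  by (intro has_derivative_mult_right has_derivative_diff log_deriv LF_deriv LG_deriv assms)

lemma Rbar_deriv:
  assumes "LF a n k x > 0" "LG a d n k x > 0"
  shows "((\<lambda>P. Rbar c a d n P x k) has_derivative Rd c a d n x k) (at x)"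
  unfolding Rbar_def ffun_eq ghat_eq Rd_def[abs_def]
  by (intro has_derivative_mult_right has_derivative_diff log_deriv tan_deriv LF_deriv LG_deriv assms)

lemma Rhat_deriv:
  assumes "LF a n k x > 0" "LG a d n k x > 0"
  shows "((\<lambda>P. Rhat c a d n P x k) has_derivative Rd c a d n x k) (at x)"
  unfolding Rhat_def fhat_eq gfun_eq Rd_def[abs_def]
  by (intro has_derivative_mult_right has_derivative_diff log_deriv tan_deriv LF_deriv LG_deriv assms)

lemma Rbar_diag: "Rbar c a d n P P k = Rate c a d n P k"
  by (simp add: Rbar_def Rate_def ghat_eq gfun_eq)
lemma Rhat_diag: "Rhat c a d n P P k = Rate c a d n P k"
  by (simp add: Rhat_def Rate_def fhat_eq ffun_eq)
lemma EEbar_diag: "EEbar c a d n C0 \<Delta> \<beta> P P = EE c a d n C0 \<Delta> \<beta> P"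
  by (simp add: EEbar_def EE_def Rbar_diag Rhat_diag)

definition DD where
  "DD c a d n C0 \<Delta> \<beta> x h =
    ((\<Sum>k\<in>UNIV. Rd c a d n x k h) * PN C0 \<Delta> \<beta> x (\<lambda>k. Rate c a d n x k)
     - (\<Sum>k\<in>UNIV. Rate c a d n x k) * ((\<Sum>k\<in>UNIV. \<Delta> k * h$k) + (\<Sum>k\<in>UNIV. \<beta> k * Rd c a d n x k h)))
    / (PN C0 \<Delta> \<beta> x (\<lambda>k. Rate c a d n x k) * PN C0 \<Delta> \<beta> x (\<lambda>k. Rate c a d n x k))"

lemma EE_deriv:
  assumes "\<And>k. LF a n k x > 0" "\<And>k. LG a d n k x > 0"
    and "PN C0 \<Delta> \<beta> x (\<lambda>k. Rate c a d n x k) \<noteq> 0"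
  shows "(EE c a d n C0 \<Delta> \<beta> has_derivative DD c a d n C0 \<Delta> \<beta> x) (at x)"
proof -
  have N: "((\<lambda>P. \<Sum>k\<in>UNIV. Rate c a d n P k) has_derivative (\<lambda>h. \<Sum>k\<in>UNIV. Rd c a d n x k h)) (at x)"
    by (intro has_derivative_sum Rate_deriv assms)
  have D: "((\<lambda>P. PN C0 \<Delta> \<beta> P (\<lambda>k. Rate c a d n P k)) has_derivative
     (\<lambda>h. (\<Sum>k\<in>UNIV. \<Delta> k * h$k) + (\<Sum>k\<in>UNIV. \<beta> k * Rd c a d n x k h))) (at x)"
  proof -
    have s1: "((\<lambda>P. \<Sum>k\<in>UNIV. \<Delta> k * P$k) has_derivative (\<lambda>h. \<Sum>k\<in>UNIV. \<Delta> k * h$k)) (at x)"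
      by (intro has_derivative_sum has_derivative_mult_right vnth_deriv)
    have s2: "((\<lambda>P. \<Sum>k\<in>UNIV. \<beta> k * Rate c a d n P k) has_derivative (\<lambda>h. \<Sum>k\<in>UNIV. \<beta> k * Rd c a d n x k h)) (at x)"
      by (intro has_derivative_sum has_derivative_mult_right Rate_deriv assms)
    have "((\<lambda>P. C0 + (\<Sum>k\<in>UNIV. \<Delta> k * P$k) + (\<Sum>k\<in>UNIV. \<beta> k * Rate c a d n P k)) has_derivative
       (\<lambda>h. 0 + (\<Sum>k\<in>UNIV. \<Delta> k * h$k) + (\<Sum>k\<in>UNIV. \<beta> k * Rd c a d n x k h))) (at x)"
      by (intro has_derivative_add has_derivative_const s1 s2)
    then show ?thesis unfolding PN_def by simp
  qed
  show ?thesis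
    unfolding EE_def[abs_def] DD_def[abs_def]
    using has_derivative_divide'[OF N D assms(3)] by simp
qed

lemma EEbar_deriv:
  assumes "\<And>k. LF a n k x > 0" "\<And>k. LG a d n k x > 0"
    and "PN C0 \<Delta> \<beta> x (\<lambda>k. Rate c a d n x k) \<noteq> 0"
  shows "((\<lambda>P. EEbar c a d n C0 \<Delta> \<beta> P x) has_derivative DD c a d n C0 \<Delta> \<beta> x) (at x)"
proof -
  have N: "((\<lambda>P. \<Sum>k\<in>UNIV. Rbar c a d n P x k) has_derivative (\<lambda>h. \<Sum>k\<in>UNIV. Rd c a d n x k h)) (at x)"
    by (intro has_derivative_sum Rbar_deriv assms)
  have D: "((\<lambda>P. PN C0 \<Delta> \<beta> P (\<lambda>k. Rhat c a d n P x k)) has_derivative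
     (\<lambda>h. (\<Sum>k\<in>UNIV. \<Delta> k * h$k) + (\<Sum>k\<in>UNIV. \<beta> k * Rd c a d n x k h))) (at x)"
  proof -
    have s1: "((\<lambda>P. \<Sum>k\<in>UNIV. \<Delta> k * P$k) has_derivative (\<lambda>h. \<Sum>k\<in>UNIV. \<Delta> k * h$k)) (at x)"
      by (intro has_derivative_sum has_derivative_mult_right vnth_deriv)
    have s2: "((\<lambda>P. \<Sum>k\<in>UNIV. \<beta> k * Rhat c a d n P x k) has_derivative (\<lambda>h. \<Sum>k\<in>UNIV. \<beta> k * Rd c a d n x k h)) (at x)"
      by (intro has_derivative_sum has_derivative_mult_right Rhat_deriv assms)
    have "((\<lambda>P. C0 + (\<Sum>k\<in>UNIV. \<Delta> k * P$k) + (\<Sum>k\<in>UNIV. \<beta> k * Rhat c a d n P x k)) has_derivative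
       (\<lambda>h. 0 + (\<Sum>k\<in>UNIV. \<Delta> k * h$k) + (\<Sum>k\<in>UNIV. \<beta> k * Rd c a d n x k h))) (at x)"
      by (intro has_derivative_add has_derivative_const s1 s2)
    then show ?thesis unfolding PN_def by simp
  qed
  have "PN C0 \<Delta> \<beta> x (\<lambda>k. Rhat c a d n x x k) \<noteq> 0" using assms(3) by (simp add: Rhat_diag)
  from has_derivative_divide'[OF N D this] show ?thesis
    unfolding EEbar_def[abs_def] DD_def[abs_def] by (simp add: Rhat_diag Rbar_diag)
qed

lemma dir_le:
  fixes \<phi> :: "real^'k::finite \<Rightarrow> real"
  assumes d: "(\<phi> has_derivative D) (at x)" and le: "\<And>t. 0 \<le> t \<Longrightarrow> t \<le> 1 \<Longrightarrow> \<phi> (x + t *\<^sub>R v) \<le> \<phi> x"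
  shows "D v \<le> 0"
proof -
  have lin: "linear D" using d by (rule has_derivative_linear)
  have g: "((\<lambda>t::real. x + t *\<^sub>R v) has_derivative (\<lambda>t. t *\<^sub>R v)) (at 0)"
    by (auto intro!: derivative_eq_intros)
  have "((\<lambda>t. \<phi> (x + t *\<^sub>R v)) has_derivative (\<lambda>t. D (t *\<^sub>R v))) (at 0)"
    using has_derivative_compose[OF g] d by simp
  moreover have "(\<lambda>t. D (t *\<^sub>R v)) = (*) (D v)"
    using lin by (auto simp add: linear_scale)
  ultimately have "((\<lambda>t. \<phi> (x + t *\<^sub>R v)) has_real_derivative D v) (at 0)"
    by (simp add: has_field_derivative_def)
  then have "((\<lambda>y. (\<phi> (x + y *\<^sub>R v) - \<phi> x) / y) \<longlongrightarrow> D v) (at 0)"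
    by (simp add: has_field_derivative_iff)
  then have T: "((\<lambda>y. (\<phi> (x + y *\<^sub>R v) - \<phi> x) / y) \<longlongrightarrow> D v) (at_right 0)"
    by (rule tendsto_mono[rotated]) (simp add: at_le)
  have "\<forall>\<^sub>F y in at_right 0. (\<phi> (x + y *\<^sub>R v) - \<phi> x) / y \<le> 0"
    unfolding eventually_at_right_field
    by (rule exI[of _ 1]) (auto intro!: divide_nonpos_pos le)
  from tendsto_upperbound[OF T this] show ?thesis by simp
qed


lemma log_concave:
  assumes "x > 0" "y > 0"
  shows "log 2 y \<le> log 2 x + (y - x) / (ln 2 * x)"
proof -
  have "ln (y / x) \<le> y / x - 1" using assms by (intro ln_le_minus_one) simp
  then have "ln y - ln x \<le> (y - x) / x" using assms by (simp add: ln_div diff_divide_distrib)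
  then have "(ln y - ln x) / ln 2 \<le> ((y - x) / x) / ln 2" by (intro divide_right_mono) auto
  moreover have "log 2 y - log 2 x = (ln y - ln x) / ln 2" by (simp add: log_def diff_divide_distrib)
  moreover have "(y - x) / (ln 2 * x) = ((y - x) / x) / ln 2" by (simp add: mult.commute)
  ultimately show ?thesis by linarith
qed

lemma LF_pos:
  assumes "\<And>k k'. a k k' \<ge> 0" "\<And>k. n k > 0" "\<And>k. 0 \<le> x$k"
  shows "LF a n k x > 0"
proof -
  have "(\<Sum>k'\<in>UNIV. a k k' * x$k') \<ge> 0" using assms by (intro sum_nonneg) simp
  then show ?thesis using assms(2)[of k] by (simp add: LF_def)
qed

lemma LG_pos:
  assumes "\<And>k k'. a k k' \<ge> 0" "\<And>k. n k > 0" "\<And>k. 0 \<le> x$k" "\<And>k. a k k \<ge> d k"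
  shows "LG a d n k x > 0"
proof -
  have "a k k * x$k \<le> (\<Sum>k'\<in>UNIV. a k k' * x$k')"
    using assms by (intro member_le_sum[where f="\<lambda>k'. a k k' * x$k'"]) auto
  moreover have "d k * x$k \<le> a k k * x$k" using assms by (simp add: mult_right_mono)
  ultimately show ?thesis using assms(2)[of k] by (simp add: LG_def)
qed

lemma LG_le_LF:
  assumes "\<And>k. d k \<ge> 0" "\<And>k. 0 \<le> x$k"
  shows "LG a d n k x \<le> LF a n k x"
  using assms by (simp add: LG_def LF_def)

lemma Rate_nonneg:
  assumes "c > 0" "\<And>k k'. a k k' \<ge> 0" "\<And>k. n k > 0" "\<And>k. 0 \<le> x$k" "\<And>k. a k k \<ge> d k" "\<And>k. d k \<ge> 0"
  shows "Rate c a d n x k \<ge> 0"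
proof -
  have "LG a d n k x > 0" using assms by (intro LG_pos) auto
  moreover have "LG a d n k x \<le> LF a n k x" using assms by (intro LG_le_LF) auto
  ultimately have "log 2 (LG a d n k x) \<le> log 2 (LF a n k x)" by simp
  then show ?thesis using assms(1) by (simp add: Rate_def ffun_eq gfun_eq)
qed

lemma Rbar_le:
  assumes "c > 0" "\<And>k k'. a k k' \<ge> 0" "\<And>k. n k > 0" "\<And>k. 0 \<le> x$k" "\<And>k. 0 \<le> y$k" "\<And>k. a k k \<ge> d k"
  shows "Rbar c a d n x y k \<le> Rate c a d n x k"
proof -
  have "log 2 (LG a d n k x) \<le> ghat a d n x y k" unfolding ghat_eq
    using assms by (intro log_concave LG_pos) auto
  then show ?thesis using assms(1) by (simp add: Rbar_def Rate_def gfun_eq)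
qed

lemma Rhat_ge:
  assumes "c > 0" "\<And>k k'. a k k' \<ge> 0" "\<And>k. n k > 0" "\<And>k. 0 \<le> x$k" "\<And>k. 0 \<le> y$k"
  shows "Rhat c a d n x y k \<ge> Rate c a d n x k"
proof -
  have "log 2 (LF a n k x) \<le> fhat a n x y k" unfolding fhat_eq
    using assms by (intro log_concave LF_pos) auto
  then show ?thesis using assms(1) by (simp add: Rhat_def Rate_def ffun_eq)
qed

lemma PN_pos:
  assumes "C0 > 0" "\<And>k. \<Delta> k \<ge> 1" "\<And>k. \<beta> k > 0" "\<And>k. 0 \<le> x$k" "\<And>k. 0 \<le> r k"
  shows "PN C0 \<Delta> \<beta> x r > 0"
proof -
  have "(\<Sum>k\<in>UNIV. \<Delta> k * x$k) \<ge> 0" using assms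
    by (intro sum_nonneg mult_nonneg_nonneg) (auto intro: order_trans[OF zero_le_one])
  moreover have "(\<Sum>k\<in>UNIV. \<beta> k * r k) \<ge> 0" using assms
    by (intro sum_nonneg mult_nonneg_nonneg) (auto intro: less_imp_le)
  ultimately show ?thesis using assms(1) by (simp add: PN_def)
qed

lemma PN_mono:
  assumes "\<And>k. \<beta> k > 0" "\<And>k. r k \<le> s k"
  shows "PN C0 \<Delta> \<beta> x r \<le> PN C0 \<Delta> \<beta> x s"
proof -
  have "(\<Sum>k\<in>UNIV. \<beta> k * r k) \<le> (\<Sum>k\<in>UNIV. \<beta> k * s k)"
    using assms by (intro sum_mono mult_left_mono) (auto intro: less_imp_le)
  then show ?thesis by (simp add: PN_def)
qed

lemma EEbar_le_EE:
  assumes "c > 0" "\<And>k k'. a k k' \<ge> 0" "\<And>k. n k > 0" "\<And>k. 0 \<le> x$k" "\<And>k. 0 \<le> y$k"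
    "\<And>k. a k k \<ge> d k" "\<And>k. d k \<ge> 0"
    "C0 > 0" "\<And>k. \<Delta> k \<ge> 1" "\<And>k. \<beta> k > 0"
  shows "EEbar c a d n C0 \<Delta> \<beta> x y \<le> EE c a d n C0 \<Delta> \<beta> x"
proof -
  define Nb where "Nb = (\<Sum>k\<in>UNIV. Rbar c a d n x y k)"
  define N where "N = (\<Sum>k\<in>UNIV. Rate c a d n x k)"
  define Db where "Db = PN C0 \<Delta> \<beta> x (\<lambda>k. Rhat c a d n x y k)"
  define D where "D = PN C0 \<Delta> \<beta> x (\<lambda>k. Rate c a d n x k)"
  have Rn: "\<And>k. Rate c a d n x k \<ge> 0" using assms by (intro Rate_nonneg) auto
  have N0: "N \<ge> 0" unfolding N_def using Rn by (intro sum_nonneg) auto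
  have NbN: "Nb \<le> N" unfolding N_def Nb_def using assms by (intro sum_mono Rbar_le) auto
  have D0: "D > 0" unfolding D_def using assms Rn by (intro PN_pos) auto
  have DDb: "D \<le> Db" unfolding D_def Db_def using assms by (intro PN_mono Rhat_ge) auto
  have "Nb / Db \<le> N / D"
  proof (cases "Nb \<le> 0")
    case True
    then have "Nb / Db \<le> 0" using D0 DDb by (intro divide_nonpos_pos) auto
    also have "0 \<le> N / D" using N0 D0 by simp
    finally show ?thesis .
  next
    case False
    have "Nb / Db \<le> N / Db" using NbN D0 DDb by (intro divide_right_mono) auto
    also have "\<dots> \<le> N / D" using N0 D0 DDb by (intro divide_left_mono) auto
    finally show ?thesis .
  qed
  then show ?thesis unfolding EEbar_def EE_def Nb_def N_def Db_def D_def .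
qed


lemma EEbar_tendsto:
  assumes X: "(X \<longlongrightarrow> y) F" and p1: "\<And>k. LF a n k y > 0" and p2: "\<And>k. LG a d n k y > 0"
    and pn: "PN C0 \<Delta> \<beta> x (\<lambda>k. Rhat c a d n x y k) \<noteq> 0"
  shows "((\<lambda>j. EEbar c a d n C0 \<Delta> \<beta> x (X j)) \<longlongrightarrow> EEbar c a d n C0 \<Delta> \<beta> x y) F"
proof -
  have lf: "((\<lambda>j. LF a n k (X j)) \<longlongrightarrow> LF a n k y) F" for k by (rule LF_tendsto[OF X])
  have lg: "((\<lambda>j. LG a d n k (X j)) \<longlongrightarrow> LG a d n k y) F" for k by (rule LG_tendsto[OF X])
  have 1: "((\<lambda>j. Rbar c a d n x (X j) k) \<longlongrightarrow> Rbar c a d n x y k) F" for k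
    unfolding Rbar_def ghat_eq
    using p2[of k] by (intro tendsto_intros lg) auto
  have 2: "((\<lambda>j. Rhat c a d n x (X j) k) \<longlongrightarrow> Rhat c a d n x y k) F" for k
    unfolding Rhat_def fhat_eq
    using p1[of k] by (intro tendsto_intros lf) auto
  have 3: "((\<lambda>j. PN C0 \<Delta> \<beta> x (\<lambda>k. Rhat c a d n x (X j) k)) \<longlongrightarrow> PN C0 \<Delta> \<beta> x (\<lambda>k. Rhat c a d n x y k)) F"
    unfolding PN_def by (intro tendsto_intros 2)
  show ?thesis unfolding EEbar_def
    by (intro tendsto_divide tendsto_sum 1 3 pn)
qed

lemma Feas_conv:
  assumes x: "x \<in> Feas Pmax a d n \<gamma>" and y: "y \<in> Feas Pmax a d n \<gamma>" and t: "0 \<le> t" "t \<le> 1"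
  shows "x + t *\<^sub>R (y - x) \<in> Feas Pmax a d n \<gamma>"
  unfolding Feas_def
proof (intro CollectI allI conjI)
  fix k
  have ce: "(x + t *\<^sub>R (y - x))$k' = (1 - t) * x$k' + t * y$k'" for k'
    by (simp add: algebra_simps)
  have xk: "0 \<le> x$k" "x$k \<le> Pmax" "\<gamma> k * ((\<Sum>k'\<in>UNIV. a k k' * x$k') + n k) - (1 + \<gamma> k) * d k * x$k \<le> 0"
    using x by (auto simp: Feas_def)
  have yk: "0 \<le> y$k" "y$k \<le> Pmax" "\<gamma> k * ((\<Sum>k'\<in>UNIV. a k k' * y$k') + n k) - (1 + \<gamma> k) * d k * y$k \<le> 0"
    using y by (auto simp: Feas_def)
  show "0 \<le> (x + t *\<^sub>R (y - x))$k" unfolding ce using xk yk t by simp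
  have "(1 - t) * x$k + t * y$k \<le> (1 - t) * Pmax + t * Pmax"
    using xk yk t by (intro add_mono mult_left_mono) auto
  then show "(x + t *\<^sub>R (y - x))$k \<le> Pmax" unfolding ce by (simp add: algebra_simps)
  have se: "(\<Sum>k'\<in>UNIV. a k k' * ((1 - t) * x$k' + t * y$k')) =
      (1 - t) * (\<Sum>k'\<in>UNIV. a k k' * x$k') + t * (\<Sum>k'\<in>UNIV. a k k' * y$k')"
  proof -
    have "(\<Sum>k'\<in>UNIV. a k k' * ((1 - t) * x$k' + t * y$k')) =
        (\<Sum>k'\<in>UNIV. (1 - t) * (a k k' * x$k') + t * (a k k' * y$k'))"
      by (intro sum.cong) (auto simp: algebra_simps)
    also have "\<dots> = (1 - t) * (\<Sum>k'\<in>UNIV. a k k' * x$k') + t * (\<Sum>k'\<in>UNIV. a k k' * y$k')"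
      by (simp add: sum.distrib sum_distrib_left)
    finally show ?thesis .
  qed
  have "\<gamma> k * ((\<Sum>k'\<in>UNIV. a k k' * ((1 - t) * x$k' + t * y$k')) + n k) - (1 + \<gamma> k) * d k * ((1 - t) * x$k + t * y$k)
     = (1 - t) * (\<gamma> k * ((\<Sum>k'\<in>UNIV. a k k' * x$k') + n k) - (1 + \<gamma> k) * d k * x$k)
       + t * (\<gamma> k * ((\<Sum>k'\<in>UNIV. a k k' * y$k') + n k) - (1 + \<gamma> k) * d k * y$k)"
    unfolding se by (simp add: algebra_simps)
  also have "\<dots> \<le> 0" using xk yk t
    by (intro add_nonpos_nonpos mult_nonneg_nonpos) auto
  finally show "\<gamma> k * ((\<Sum>k'\<in>UNIV. a k k' * (x + t *\<^sub>R (y - x))$k') + n k) - (1 + \<gamma> k) * d k * (x + t *\<^sub>R (y - x))$k \<le> 0"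
    unfolding ce .
qed


theorem theorem1:
  fixes c Pmax C0 :: real
    and a :: "'k::finite \<Rightarrow> 'k \<Rightarrow> real"
    and d n \<gamma> \<Delta> \<beta> :: "'k \<Rightarrow> real"
    and Pseq :: "nat \<Rightarrow> real^'k"
  assumes c_pos: "c > 0" and Pmax_pos: "Pmax > 0"
    and a_nonneg: "\<And>k k'. a k k' \<ge> 0"
    and d_nonneg: "\<And>k. d k \<ge> 0"
    and n_pos: "\<And>k. n k > 0"
    and a_ge_d: "\<And>k. a k k \<ge> d k"
    and gamma_nonneg: "\<And>k. \<gamma> k \<ge> 0"
    and C0_pos: "C0 > 0"
    and Delta_ge1: "\<And>k. \<Delta> k \<ge> 1"
    and beta_pos: "\<And>k. \<beta> k > 0"
    and F_nonempty: "Feas Pmax a d n \<gamma> \<noteq> {}"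
    and init: "Pseq 0 \<in> Feas Pmax a d n \<gamma>"
    and step: "\<And>m. Pseq (Suc m) \<in> Feas Pmax a d n \<gamma> \<and>
                 (\<forall>P\<in>Feas Pmax a d n \<gamma>.
                    EEbar c a d n C0 \<Delta> \<beta> P (Pseq m) \<le> EEbar c a d n C0 \<Delta> \<beta> (Pseq (Suc m)) (Pseq m))"
  shows "\<forall>Ps. limit_point Pseq Ps \<longrightarrow>
           stationary_point (EE c a d n C0 \<Delta> \<beta>) (Feas Pmax a d n \<gamma>) Ps"
proof (intro allI impI)
  fix Ps assume "limit_point Pseq Ps"
  then obtain r where r: "strict_mono r" "(Pseq \<circ> r) \<longlonglongrightarrow> Ps" by (auto simp: limit_point_def)
  have rl: "(\<lambda>j. Pseq (r j)) \<longlonglongrightarrow> Ps" using r(2) by (simp add: o_def)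
  let ?F = "Feas Pmax a d n \<gamma>"
  let ?EE = "EE c a d n C0 \<Delta> \<beta>"
  let ?EEb = "EEbar c a d n C0 \<Delta> \<beta>"
  have inF: "Pseq m \<in> ?F" for m by (cases m) (use init step in auto)
  have nn: "P \<in> ?F \<Longrightarrow> 0 \<le> P$k" for P k by (simp add: Feas_def)
  have PsF: "Ps \<in> ?F"
    unfolding Feas_def
  proof (intro CollectI allI conjI)
    fix k
    have comp: "(\<lambda>j. Pseq (r j) $ k') \<longlonglongrightarrow> Ps $ k'" for k' using rl by (intro tendsto_vec_nth)
    show "0 \<le> Ps$k" by (rule LIMSEQ_le_const[OF comp]) (use inF in \<open>auto simp: Feas_def\<close>)
    show "Ps$k \<le> Pmax" by (rule LIMSEQ_le_const2[OF comp]) (use inF in \<open>auto simp: Feas_def\<close>)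
    have "(\<lambda>j. \<gamma> k * ((\<Sum>k'\<in>UNIV. a k k' * Pseq (r j)$k') + n k) - (1 + \<gamma> k) * d k * Pseq (r j)$k)
       \<longlonglongrightarrow> \<gamma> k * ((\<Sum>k'\<in>UNIV. a k k' * Ps$k') + n k) - (1 + \<gamma> k) * d k * Ps$k"
      by (intro tendsto_intros comp)
    then show "\<gamma> k * ((\<Sum>k'\<in>UNIV. a k k' * Ps$k') + n k) - (1 + \<gamma> k) * d k * Ps$k \<le> 0"
      by (rule LIMSEQ_le_const2) (use inF in \<open>auto simp: Feas_def\<close>)
  qed
  have LFp: "P \<in> ?F \<Longrightarrow> LF a n k P > 0" for P k
    using a_nonneg n_pos nn by (intro LF_pos) auto
  have LGp: "P \<in> ?F \<Longrightarrow> LG a d n k P > 0" for P k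
    using a_nonneg n_pos nn a_ge_d by (intro LG_pos) auto
  have Rn: "P \<in> ?F \<Longrightarrow> Rate c a d n P k \<ge> 0" for P k
    using c_pos a_nonneg n_pos nn a_ge_d d_nonneg by (intro Rate_nonneg) auto
  have PNp: "P \<in> ?F \<Longrightarrow> PN C0 \<Delta> \<beta> P (\<lambda>k. Rate c a d n P k) > 0" for P
    using C0_pos Delta_ge1 beta_pos nn Rn by (intro PN_pos) auto
  have PNp2: "P \<in> ?F \<Longrightarrow> Q \<in> ?F \<Longrightarrow> PN C0 \<Delta> \<beta> P (\<lambda>k. Rhat c a d n P Q k) > 0" for P Q
    using C0_pos Delta_ge1 beta_pos nn Rn order_trans[OF Rn Rhat_ge[OF c_pos a_nonneg n_pos]]
    by (intro PN_pos) auto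
  have le: "P \<in> ?F \<Longrightarrow> Q \<in> ?F \<Longrightarrow> ?EEb P Q \<le> ?EE P" for P Q
    using c_pos a_nonneg n_pos nn a_ge_d d_nonneg C0_pos Delta_ge1 beta_pos
    by (intro EEbar_le_EE) auto
  have mono: "?EE (Pseq m) \<le> ?EE (Pseq (Suc m))" for m
  proof -
    have "?EE (Pseq m) = ?EEb (Pseq m) (Pseq m)" by (simp add: EEbar_diag)
    also have "\<dots> \<le> ?EEb (Pseq (Suc m)) (Pseq m)" using step[of m] inF[of m] by blast
    also have "\<dots> \<le> ?EE (Pseq (Suc m))" using le inF by blast
    finally show ?thesis .
  qed
  have inc: "incseq (\<lambda>m. ?EE (Pseq m))" by (rule incseq_SucI) (rule mono)
  have dEE: "(?EE has_derivative DD c a d n C0 \<Delta> \<beta> Ps) (at Ps)"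
    using LFp[OF PsF] LGp[OF PsF] PNp[OF PsF] by (intro EE_deriv) auto
  have cont: "(\<lambda>j. ?EE (Pseq (r j))) \<longlonglongrightarrow> ?EE Ps"
    using has_derivative_continuous[OF dEE] rl by (rule isCont_tendsto_compose)
  have bnd: "?EE (Pseq m) \<le> ?EE Ps" for m
  proof (rule LIMSEQ_le_const[OF cont], intro exI allI impI)
    fix j assume "m \<le> j"
    then have "m \<le> r j" using seq_suble[OF r(1), of j] by linarith
    then show "?EE (Pseq m) \<le> ?EE (Pseq (r j))" using inc by (simp add: incseq_def)
  qed
  have maxb: "?EEb P Ps \<le> ?EEb Ps Ps" if P: "P \<in> ?F" for P
  proof -
    have t: "(\<lambda>j. ?EEb P (Pseq (r j))) \<longlonglongrightarrow> ?EEb P Ps"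
      using LFp[OF PsF] LGp[OF PsF] PNp2[OF P PsF] by (intro EEbar_tendsto[OF rl]) auto
    have "?EEb P Ps \<le> ?EE Ps"
    proof (rule LIMSEQ_le_const2[OF t], intro exI allI impI)
      fix j
      have "?EEb P (Pseq (r j)) \<le> ?EEb (Pseq (Suc (r j))) (Pseq (r j))" using step P by blast
      also have "\<dots> \<le> ?EE (Pseq (Suc (r j)))" using le inF by blast
      also have "\<dots> \<le> ?EE Ps" by (rule bnd)
      finally show "?EEb P (Pseq (r j)) \<le> ?EE Ps" .
    qed
    then show ?thesis by (simp add: EEbar_diag)
  qed
  show "stationary_point ?EE ?F Ps"
    unfolding stationary_point_def
  proof (intro conjI exI ballI)
    show "Ps \<in> ?F" by (rule PsF)
    show "(?EE has_derivative DD c a d n C0 \<Delta> \<beta> Ps) (at Ps)" by (rule dEE)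
    fix P assume P: "P \<in> ?F"
    have dEEb: "((\<lambda>Q. ?EEb Q Ps) has_derivative DD c a d n C0 \<Delta> \<beta> Ps) (at Ps)"
      using LFp[OF PsF] LGp[OF PsF] PNp[OF PsF] by (intro EEbar_deriv) auto
    show "DD c a d n C0 \<Delta> \<beta> Ps (P - Ps) \<le> 0"
      using dEEb by (rule dir_le) (intro maxb Feas_conv PsF P)
  qed
qed

end
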